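(* Let $p,n\in\mathbb{N}$ with $p,n\ge1$, $r\in\mathbb{N}$ with $r\le p$, and assume $n\ge\max\{2p-\lfloor p/2\rfloor,\;2p-2\lfloor p/2\rfloor+1\}$. Then $$X^{p,r,1}=n^{2r-1}\big(T_n^{\bm\alpha}+H_n^{\bm\alpha,1}\big),$$ where $\alpha_k=(-1)^r\mathcal{N}_{2p+1}^{(2r)}(p+1-k)$, $k=0,\dots,p$.
   Context: Cardinal B-spline: $\mathcal{N}_0(t)=1$ for $t\in[0,1)$, $0$ otherwise; $\mathcal{N}_p(t)=\frac{t}{p}\mathcal{N}_{p-1}(t)+\frac{p+1-t}{p}\mathcal{N}_{p-1}(t-1)$, $p\ge1$ (support $[0,p+1]$, $C^{p-1}$). Neumann basis: for $c\in\mathbb{R}$ put $C_c(x)=\mathcal{N}_p\big(nx-c+\tfrac{p+1}{2}\big)$ (B-spline centred at $c/n$), and for $i=1,\dots,n$, $x\in[0,1]$, $$N^p_{i,1}(x)=\sum_{m\in\mathbb{Z}}\Big(C_{i-\frac12+2mn}(x)+C_{-(i-\frac12)+2mn}(x)\Big).$$ These form a basis of the $C^{p-1}$ splines of degree $p$ with breakpoints $(k+\frac12)/n$ ($p$ odd) or $k/n$ ($p$ even) whose derivatives of all odd orders $\le p$ vanish at $0$ and $1$. $X^{p,r,1}_{i,j}=\int_0^1(N^p_{i,1})^{(r)}(N^p_{j,1})^{(r)}\,\mathrm{d}x$ (piecewise derivatives if $r=p$). For $\bm\alpha\in\mathbb{R}^{p+1}$, $n\ge p+1$, with $\alpha_k=0$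 for $k>p$: $(T_n^{\bm\alpha})_{i,j}=\alpha_{|i-j|}$ and $(H_n^{\bm\alpha,1})_{i,j}=\alpha_{i+j-1}+\alpha_{2n+1-i-j}$. *)

theory Defs
  imports "HOL-Analysis.Analysis"
begin

fun cardBspline :: "nat \<Rightarrow> real \<Rightarrow> real" where
  "cardBspline 0 t = (if 0 \<le> t \<and> t < 1 then 1 else 0)"
| "cardBspline (Suc p) t =
     t / real (Suc p) * cardBspline p t
     + (real (Suc p) + 1 - t) / real (Suc p) * cardBspline p (t - 1)"

text \<open>r-th derivative (iterated deriv). At the finitely many breakpoints where a
  classical derivative fails to exist the value is unspecified; this does not affect
  integrals (piecewise derivative).\<close>
definition nth_deriv :: "nat \<Rightarrow> (real \<Rightarrow> real) \<Rightarrow> real \<Rightarrow> real" where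
  "nth_deriv r f = (deriv ^^ r) f"

definition centredB :: "nat \<Rightarrow> nat \<Rightarrow> real \<Rightarrow> real \<Rightarrow> real" where
  "centredB p n c x = cardBspline p (real n * x - c + (real p + 1) / 2)"

definition neumannBasis :: "nat \<Rightarrow> nat \<Rightarrow> nat \<Rightarrow> real \<Rightarrow> real" where
  "neumannBasis p n i x =
     (\<Sum>\<^sub>\<infinity>m::int. centredB p n (real i - 1/2 + 2 * real_of_int m * real n) x
                  + centredB p n (- (real i - 1/2) + 2 * real_of_int m * real n) x)"

text \<open>Matrix X^{p,r,1}, entries indexed by i,j in {1..n}.\<close>
definition Xmat :: "nat \<Rightarrow> nat \<Rightarrow> nat \<Rightarrow> nat \<Rightarrow> nat \<Rightarrow> real" where
  "Xmat p r n i j = integral {0..1}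
     (\<lambda>x. nth_deriv r (neumannBasis p n i) x * nth_deriv r (neumannBasis p n j) x)"

text \<open>Toeplitz and Hankel matrices from a sequence alpha (alpha k = 0 for k > p
  is built into alpha itself).\<close>
definition toeplitzM :: "(nat \<Rightarrow> real) \<Rightarrow> nat \<Rightarrow> nat \<Rightarrow> real" where
  "toeplitzM \<alpha> i j = \<alpha> (if i \<le> j then j - i else i - j)"

definition hankelM :: "nat \<Rightarrow> (nat \<Rightarrow> real) \<Rightarrow> nat \<Rightarrow> nat \<Rightarrow> real" where
  "hankelM n \<alpha> i j = \<alpha> (i + j - 1) + \<alpha> (2 * n + 1 - i - j)"

definition alphaSeq :: "nat \<Rightarrow> nat \<Rightarrow> nat \<Rightarrow> real" where
  "alphaSeq p r k = (if k \<le> p then (-1) ^ r *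
      nth_deriv (2 * r) (cardBspline (2 * p + 1)) (real p + 1 - real k) else 0)"

end

theory Submission
  imports Defs
begin


definition tp :: "real \<Rightarrow> nat \<Rightarrow> real \<Rightarrow> real" where
  "tp k m t = (if k \<le> t then (t - k) ^ m else 0)"

definition Bx :: "nat \<Rightarrow> nat \<Rightarrow> real \<Rightarrow> real" where
  "Bx p r t = (\<Sum>k\<le>Suc p. (-1) ^ k * real (Suc p choose k) * tp (real k) (p - r) t) / fact (p - r)"

lemma tp_Suc: "tp k (Suc m) t = (t - k) * tp k m t"
  by (simp add: tp_def)

lemma tp_shift: "tp k m (t - 1) = tp (k + 1) m t"
  by (simp add: tp_def algebra_simps)

lemma coef_id:
  "real (Suc (Suc p) choose k) * (t - real k) =
     t * real (Suc p choose k) - (real p + 2 - t) * (case k of 0 \<Rightarrow> 0 | Suc j \<Rightarrow> real (Suc p choose j))"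
proof (cases k)
  case 0 then show ?thesis by simp
next
  case (Suc j)
  have e1: "real (Suc (Suc p) choose Suc j) = real (Suc p choose Suc j) + real (Suc p choose j)"
    by simp
  have e2: "real (Suc j) * real (Suc (Suc p) choose Suc j) = real (Suc (Suc p)) * real (Suc p choose j)"
    using Suc_times_binomial[of j "Suc p"] by (metis of_nat_mult)
  show ?thesis using e1 e2 Suc by (simp add: algebra_simps)
qed

lemma sum_id:
  "(\<Sum>k\<le>Suc (Suc p). (-1) ^ k * real (Suc (Suc p) choose k) * tp (real k) (Suc p) t)
   = t * (\<Sum>k\<le>Suc p. (-1) ^ k * real (Suc p choose k) * tp (real k) p t)
     + (real p + 2 - t) * (\<Sum>k\<le>Suc p. (-1) ^ k * real (Suc p choose k) * tp (real k + 1) p t)"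
proof -
  define c where "c k = (case k of 0 \<Rightarrow> 0 | Suc j \<Rightarrow> real (Suc p choose j))" for k
  have "(\<Sum>k\<le>Suc (Suc p). (-1) ^ k * real (Suc (Suc p) choose k) * tp (real k) (Suc p) t)
     = (\<Sum>k\<le>Suc (Suc p). (-1) ^ k * (t * real (Suc p choose k) - (real p + 2 - t) * c k) * tp (real k) p t)"
    by (intro sum.cong refl) (simp add: tp_Suc coef_id c_def mult.assoc[symmetric])
  also have "\<dots> = t * (\<Sum>k\<le>Suc (Suc p). (-1) ^ k * real (Suc p choose k) * tp (real k) p t)
      - (real p + 2 - t) * (\<Sum>k\<le>Suc (Suc p). (-1) ^ k * c k * tp (real k) p t)"
    by (simp only: sum_distrib_left sum_subtractf[symmetric]) (intro sum.cong refl, simp add: algebra_simps)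
  also have "(\<Sum>k\<le>Suc (Suc p). (-1) ^ k * real (Suc p choose k) * tp (real k) p t)
      = (\<Sum>k\<le>Suc p. (-1) ^ k * real (Suc p choose k) * tp (real k) p t)"
    by (simp add: binomial_eq_0)
  also have "(\<Sum>k\<le>Suc (Suc p). (-1) ^ k * c k * tp (real k) p t)
      = - (\<Sum>k\<le>Suc p. (-1) ^ k * real (Suc p choose k) * tp (real k + 1) p t)"
    by (subst sum.atMost_Suc_shift) (simp add: c_def sum_negf algebra_simps)
  finally show ?thesis by (simp only: mult_minus_right diff_minus_eq_add)
qed

lemma cardB_Bx: "cardBspline p t = Bx p 0 t"
proof (induction p arbitrary: t)
  case 0
  show ?case by (simp add: Bx_def tp_def)
next
  case (Suc p)
  define S1 where "S1 = (\<Sum>k\<le>Suc p. (-1) ^ k * real (Suc p choose k) * tp (real k) p t)"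
  define S2 where "S2 = (\<Sum>k\<le>Suc p. (-1) ^ k * real (Suc p choose k) * tp (real k + 1) p t)"
  have b1: "Bx p 0 t = S1 / fact p" by (simp add: Bx_def S1_def)
  have b2: "Bx p 0 (t - 1) = S2 / fact p" by (simp add: Bx_def S2_def tp_shift)
  have b3: "Bx (Suc p) 0 t = (t * S1 + (real p + 2 - t) * S2) / fact (Suc p)"
    unfolding Bx_def S1_def S2_def by (simp only: diff_zero sum_id)
  have "cardBspline (Suc p) t = t / real (Suc p) * Bx p 0 t + (real (Suc p) + 1 - t) / real (Suc p) * Bx p 0 (t - 1)"
    by (simp add: Suc.IH)
  also have "\<dots> = Bx (Suc p) 0 t"
    unfolding b1 b2 b3 by (simp add: field_simps) (simp add: add_divide_distrib[symmetric] diff_divide_distrib[symmetric] algebra_simps)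
  finally show ?case .
qed



lemma tp_deriv:
  assumes "1 \<le> m \<or> t \<noteq> k"
  shows "(tp k (Suc m) has_real_derivative (real (Suc m) * tp k m t)) (at t)"
proof -
  consider "t > k" | "t < k" | "t = k" "1 \<le> m" using assms by linarith
  then show ?thesis
  proof cases
    case 1
    have d: "((\<lambda>t. (t - k) ^ Suc m) has_real_derivative (real (Suc m) * (t - k) ^ m)) (at t)"
    proof -
      have "((\<lambda>t. t - k) has_real_derivative 1) (at t)" by (auto intro!: derivative_eq_intros)
      from DERIV_power[OF this, where n="Suc m"] show ?thesis by simp
    qed
    show ?thesis
      by (rule has_field_derivative_transform_within_open[OF _ _ _, of _ _ _ "{k<..}"])
         (use d 1 in \<open>auto simp: tp_def\<close>)
  next
    case 2
    have d: "((\<lambda>t. 0) has_real_derivative 0) (at t)" by simp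
    show ?thesis
      by (rule has_field_derivative_transform_within_open[OF _ _ _, of _ _ _ "{..<k}"])
         (use d 2 in \<open>auto simp: tp_def\<close>)
  next
    case 3
    have lim: "((\<lambda>h. (max h 0) ^ m) \<longlongrightarrow> (max 0 0) ^ m) (at (0::real))"
      by (intro tendsto_intros)
    have ev: "\<forall>\<^sub>F h in at (0::real). (max h 0) ^ m = (tp k (Suc m) (k + h) - tp k (Suc m) k) / h"
      unfolding eventually_at_filter
      using 3 by (auto simp: tp_def max_def power_0_left)
    have "((\<lambda>h. (tp k (Suc m) (k + h) - tp k (Suc m) k) / h) \<longlongrightarrow> 0) (at 0)"
      using tendsto_cong[OF ev] lim 3 by (simp add: power_0_left)
    then show ?thesis using 3 by (simp add: DERIV_def tp_def power_0_left)
  qed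
qed

definition Zs :: "nat \<Rightarrow> real set" where "Zs p = real ` {..Suc p}"

lemma finite_Zs: "finite (Zs p)" by (simp add: Zs_def)

lemma aux_fact: "(real (Suc q) * S) / fact (Suc q) = S / (fact q :: real)"
  by (simp add: fact_Suc del: of_nat_Suc)

lemma Bx_deriv:
  assumes "Suc r < p \<or> (Suc r = p \<and> t \<notin> Zs p)"
  shows "(Bx p r has_real_derivative Bx p (Suc r) t) (at t)"
proof -
  have pr: "p - r = Suc (p - Suc r)" using assms by auto
  have "((\<lambda>t. (\<Sum>k\<le>Suc p. (-1) ^ k * real (Suc p choose k) * tp (real k) (Suc (p - Suc r)) t) / fact (Suc (p - Suc r)))
     has_real_derivative
      (\<Sum>k\<le>Suc p. (-1) ^ k * real (Suc p choose k) * (real (Suc (p - Suc r)) * tp (real k) (p - Suc r) t)) / fact (Suc (p - Suc r))) (at t)"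
  proof (intro DERIV_cdivide DERIV_sum DERIV_cmult)
    fix k assume "k \<in> {..Suc p}"
    then have "1 \<le> p - Suc r \<or> t \<noteq> real k" using assms by (auto simp: Zs_def)
    then show "(tp (real k) (Suc (p - Suc r)) has_real_derivative real (Suc (p - Suc r)) * tp (real k) (p - Suc r) t) (at t)"
      by (rule tp_deriv)
  qed
  moreover have "(\<Sum>k\<le>Suc p. (-1) ^ k * real (Suc p choose k) * (real (Suc (p - Suc r)) * tp (real k) (p - Suc r) t)) / fact (Suc (p - Suc r))
     = Bx p (Suc r) t"
  proof -
    define S where "S = (\<Sum>k\<le>Suc p. (-1) ^ k * real (Suc p choose k) * tp (real k) (p - Suc r) t)"
    have e1: "(\<Sum>k\<le>Suc p. (-1) ^ k * real (Suc p choose k) * (real (Suc (p - Suc r)) * tp (real k) (p - Suc r) t))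
      = real (Suc (p - Suc r)) * S"
      unfolding S_def by (simp add: sum_distrib_left algebra_simps)
    have e2: "Bx p (Suc r) t = S / fact (p - Suc r)" unfolding Bx_def S_def ..
    show ?thesis unfolding e1 e2 aux_fact ..
  qed
  ultimately show ?thesis unfolding Bx_def pr by simp
qed

lemma cardB_zero: "t < 0 \<or> t \<ge> real p + 1 \<Longrightarrow> cardBspline p t = 0"
  by (induction p arbitrary: t) auto

lemma cardB_sym: "p \<ge> 1 \<Longrightarrow> cardBspline p (real p + 1 - t) = cardBspline p t"
proof (induction p arbitrary: t rule: nat_induct_at_least)
  case base
  show ?case by (auto simp: field_simps)
next
  case (Suc p)
  have a: "cardBspline p (real p + 2 - t) = cardBspline p (t - 1)"
    using Suc.IH[of "t - 1"] by (simp add: algebra_simps)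
  have "cardBspline (Suc p) (real (Suc p) + 1 - t)
      = (real p + 2 - t) / real (Suc p) * cardBspline p (real p + 2 - t)
        + t / real (Suc p) * cardBspline p (real p + 1 - t)"
    by (simp add: algebra_simps)
  also have "\<dots> = cardBspline (Suc p) t"
    using a Suc.IH[of t] by (simp add: algebra_simps)
  finally show ?case .
qed

lemma Bx_sym:
  assumes "r \<le> p" "p \<ge> 1" "s \<notin> Zs p"
  shows "Bx p r (real p + 1 - s) = (-1) ^ r * Bx p r s"
  using assms(1,3)
proof (induction r arbitrary: s)
  case 0
  then show ?case using cardB_sym[OF assms(2)] by (simp add: cardB_Bx)
next
  case (Suc r)
  have open_U: "open (- Zs p)" using finite_Zs by (simp add: finite_imp_closed open_Compl)
  have memU: "real p + 1 - u \<notin> Zs p" if "u \<notin> Zs p" for u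
  proof
    assume "real p + 1 - u \<in> Zs p"
    then obtain k where "k \<le> Suc p" "real p + 1 - u = real k" by (auto simp: Zs_def)
    then have "u = real (Suc p - k)" by (simp add: of_nat_diff)
    moreover have "Suc p - k \<in> {..Suc p}" by simp
    ultimately have "u \<in> Zs p" unfolding Zs_def by blast
    with that show False by blast
  qed
  have cond: "Suc r < p \<or> (Suc r = p \<and> u \<notin> Zs p)" if "u \<notin> Zs p" for u
    using Suc.prems that by auto
  have dg: "((\<lambda>u. real p + 1 - u) has_real_derivative -1) (at s)" by (auto intro!: derivative_eq_intros)
  have d1: "((\<lambda>u. Bx p r (real p + 1 - u)) has_real_derivative (Bx p (Suc r) (real p + 1 - s) * (-1))) (at s)"
    using DERIV_chain2[OF Bx_deriv[OF cond[OF memU[OF Suc.prems(2)]]] dg] by simp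
  have d2: "((\<lambda>u. (-1) ^ r * Bx p r u) has_real_derivative ((-1) ^ r * Bx p (Suc r) s)) (at s)"
    using Bx_deriv[OF cond[OF Suc.prems(2)]] by (auto intro!: derivative_eq_intros)
  have d1': "((\<lambda>u. (-1) ^ r * Bx p r u) has_real_derivative (Bx p (Suc r) (real p + 1 - s) * (-1))) (at s)"
    by (rule has_field_derivative_transform_within_open[OF d1 open_U]) (use Suc in auto)
  from DERIV_unique[OF d1' d2] show ?case by simp
qed



lemma Bx_zero_neg: "s < 0 \<Longrightarrow> Bx p r s = 0"
  by (simp add: Bx_def tp_def)

lemma Zs_nonneg: "s \<in> Zs p \<Longrightarrow> 0 \<le> s \<and> s \<le> real p + 1"
  by (auto simp: Zs_def)

lemma Bx_zero_big: "r \<le> p \<Longrightarrow> p \<ge> 1 \<Longrightarrow> s > real p + 1 \<Longrightarrow> Bx p r s = 0"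
  using Bx_sym[of r p "real p + 1 - s"] Zs_nonneg[of "real p + 1 - s" p] Bx_zero_neg[of "real p + 1 - s" p r]
  by auto

definition Bs :: "nat \<Rightarrow> nat \<Rightarrow> real \<Rightarrow> real" where
  "Bs p r s = (Bx p r s + (-1) ^ r * Bx p r (real p + 1 - s)) / 2"

lemma Bs_sym: "Bs p r (real p + 1 - s) = (-1) ^ r * Bs p r s"
proof -
  have "((-1::real) ^ r) * (-1) ^ r = 1" by (simp add: power_mult_distrib[symmetric])
  then show ?thesis unfolding Bs_def by (simp add: algebra_simps)
qed

lemma Bs_eq: "r \<le> p \<Longrightarrow> p \<ge> 1 \<Longrightarrow> s \<notin> Zs p \<Longrightarrow> Bs p r s = Bx p r s"
proof -
  assume a: "r \<le> p" "p \<ge> 1" "s \<notin> Zs p"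
  have "((-1::real) ^ r) * (-1) ^ r = 1" by (simp add: power_mult_distrib[symmetric])
  with Bx_sym[OF a] show ?thesis unfolding Bs_def by (simp add: algebra_simps)
qed

lemma Bs_zero: "r \<le> p \<Longrightarrow> p \<ge> 1 \<Longrightarrow> s < 0 \<or> s > real p + 1 \<Longrightarrow> Bs p r s = 0"
  unfolding Bs_def using Bx_zero_neg[of _ p r] Bx_zero_big[of r p] by auto

lemma vander_sum:
  fixes g :: "nat \<Rightarrow> real"
  shows "(\<Sum>k\<le>m. \<Sum>l\<le>m. real (m choose k) * real (m choose l) * g (k + l))
       = (\<Sum>c\<le>m + m. real ((m + m) choose c) * g c)"
proof -
  define F where "F i j = real (m choose i) * real (m choose j) * g (i + j)" for i j
  have fin: "finite {(i::nat, j::nat). i + j \<le> m + m}"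
    by (rule finite_subset[of _ "{..m+m} \<times> {..m+m}"]) auto
  have "(\<Sum>k\<le>m. \<Sum>l\<le>m. F k l) = (\<Sum>(i,j)\<in>{..m} \<times> {..m}. F i j)"
    by (simp add: sum.cartesian_product)
  also have "\<dots> = (\<Sum>(i,j)\<in>{(i,j). i + j \<le> m + m}. F i j)"
    by (rule sum.mono_neutral_left[OF fin]) (auto simp: F_def binomial_eq_0)
  also have "\<dots> = (\<Sum>c\<le>m + m. \<Sum>i\<le>c. F i (c - i))"
    by (rule sum.triangle_reindex_eq)
  also have "\<dots> = (\<Sum>c\<le>m + m. real ((m + m) choose c) * g c)"
  proof (intro sum.cong refl)
    fix c assume "c \<in> {..m + m}"
    have "(\<Sum>i\<le>c. F i (c - i)) = (\<Sum>i\<le>c. real (m choose i) * real (m choose (c - i))) * g c"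
      by (auto simp: F_def sum_distrib_right intro!: sum.cong)
    also have "(\<Sum>i\<le>c. real (m choose i) * real (m choose (c - i))) = real ((m + m) choose c)"
      by (simp only: of_nat_mult[symmetric] of_nat_sum[symmetric] vandermonde)
    finally show "(\<Sum>i\<le>c. F i (c - i)) = real ((m + m) choose c) * g c" .
  qed
  finally show ?thesis by (simp add: F_def)
qed

lemma beta_int:
  fixes k M :: real
  assumes "k \<le> M"
  shows "((\<lambda>t. (t - k) ^ q * (M - t) ^ q) has_integral (fact q ^ 2 / fact (2 * q + 1) * (M - k) ^ (2 * q + 1))) {k..M}"
proof (cases "k = M")
  case True
  then show ?thesis using has_integral_refl(2) by simp
next
  case False
  then have kM: "k < M" using assms by simp
  have B: "Beta (real q + 1) (real q + 1) = fact q ^ 2 / fact (2 * q + 1)"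
  proof -
    have "Gamma (real q + 1) = fact q" using Gamma_fact[of q] by (simp add: add.commute)
    moreover have "Gamma (real q + 1 + (real q + 1)) = fact (2 * q + 1)"
      using Gamma_fact[of "2 * q + 1"] by (simp add: algebra_simps)
    ultimately show ?thesis by (simp add: Beta_def power2_eq_square)
  qed
  have h0: "((\<lambda>s. s powr (real q + 1 - 1) * (1 - s) powr (real q + 1 - 1)) has_integral Beta (real q + 1) (real q + 1)) {0..1}"
    by (rule has_integral_Beta_real) auto
  have h1: "((\<lambda>s::real. s ^ q * (1 - s) ^ q) has_integral (fact q ^ 2 / fact (2 * q + 1))) (cbox 0 1)"
  proof (rule has_integral_spike_finite[of "{0,1}"])
    show "finite {0::real, 1}" by simp
    show "((\<lambda>s. s powr (real q + 1 - 1) * (1 - s) powr (real q + 1 - 1)) has_integral (fact q ^ 2 / fact (2 * q + 1))) (cbox 0 1)"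
      using h0 unfolding B by simp
  next
    fix x :: real assume x: "x \<in> cbox 0 1 - {0, 1}"
    then have "0 < x" "0 < 1 - x" by auto
    then show "x ^ q * (1 - x) ^ q = x powr (real q + 1 - 1) * (1 - x) powr (real q + 1 - 1)"
      by (simp add: powr_realpow)
  qed
  define m where "m = 1 / (M - k)"
  define c where "c = - k / (M - k)"
  have m0: "m > 0" using kM by (simp add: m_def)
  note h2 = has_integral_affinity'[OF h1 m0, of c]
  have e1: "(0 - c) /\<^sub>R m = k" "(1 - c) /\<^sub>R m = M"
    using kM by (auto simp: m_def c_def field_simps)
  have h3: "((\<lambda>x. (m * x + c) ^ q * (1 - (m * x + c)) ^ q) has_integral (fact q ^ 2 / fact (2 * q + 1)) * (M - k)) {k..M}"
    using h2 e1 by (simp add: m_def mult_ac)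
  have h4: "((\<lambda>x. (M - k) ^ (2 * q) * ((m * x + c) ^ q * (1 - (m * x + c)) ^ q)) has_integral
      (M - k) ^ (2 * q) * ((fact q ^ 2 / fact (2 * q + 1)) * (M - k))) {k..M}"
    by (rule has_integral_mult_right[OF h3])
  have h5: "((\<lambda>x. (M - k) ^ (2 * q) * ((m * x + c) ^ q * (1 - (m * x + c)) ^ q)) has_integral
      fact q ^ 2 / fact (2 * q + 1) * (M - k) ^ (2 * q + 1)) {k..M}"
    by (rule has_integral_eq_rhs[OF h4]) (simp add: algebra_simps)
  show ?thesis
  proof (rule has_integral_spike_finite[OF finite.emptyI _ h5])
    fix x assume "x \<in> {k..M} - {}"
    have e: "m * x + c = (x - k) / (M - k)" by (simp add: m_def c_def diff_divide_distrib)
    have "1 - (x - k) / (M - k) = (M - x) / (M - k)" using kM by (simp add: field_simps)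
    with e have "m * x + c = (x - k) / (M - k)" "1 - (m * x + c) = (M - x) / (M - k)" by auto
    moreover have "(M - k) ^ q \<noteq> 0" using kM by simp
    moreover have "(M - k) ^ (2 * q) = (M - k) ^ q * (M - k) ^ q" by (simp add: mult_2 power_add)
    ultimately show "(x - k) ^ q * (M - x) ^ q = (M - k) ^ (2 * q) * ((m * x + c) ^ q * (1 - (m * x + c)) ^ q)"
      by (simp add: power_divide)
  qed
qed



lemma pair_int:
  fixes k M A B :: real
  assumes "A \<le> k" "M \<le> B"
  shows "((\<lambda>t. tp k q t * tp (-M) q (-t)) has_integral (fact q ^ 2 / fact (2 * q + 1) * tp k (2 * q + 1) M)) {A..B}"
proof (cases "k \<le> M")
  case True
  have I1: "((\<lambda>t. tp k q t * tp (-M) q (-t)) has_integral 0) {A..k}"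
    by (rule has_integral_spike_finite[of "{k}" _ _ "\<lambda>t. 0"]) (auto simp: tp_def)
  have I3: "((\<lambda>t. tp k q t * tp (-M) q (-t)) has_integral 0) {M..B}"
    by (rule has_integral_spike_finite[of "{M}" _ _ "\<lambda>t. 0"]) (auto simp: tp_def)
  have I2: "((\<lambda>t. tp k q t * tp (-M) q (-t)) has_integral (fact q ^ 2 / fact (2 * q + 1) * (M - k) ^ (2 * q + 1))) {k..M}"
    by (rule has_integral_spike_finite[OF finite.emptyI _ beta_int[OF True]]) (auto simp: tp_def)
  have "((\<lambda>t. tp k q t * tp (-M) q (-t)) has_integral (fact q ^ 2 / fact (2 * q + 1) * (M - k) ^ (2 * q + 1) + 0)) {k..B}"
    by (rule has_integral_combine[OF True _ I2 I3]) (use assms in auto)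
  then have "((\<lambda>t. tp k q t * tp (-M) q (-t)) has_integral (0 + (fact q ^ 2 / fact (2 * q + 1) * (M - k) ^ (2 * q + 1) + 0))) {A..B}"
    by (intro has_integral_combine[OF assms(1) _ I1]) (use assms True in auto)
  then show ?thesis using True by (simp add: tp_def)
next
  case False
  have "((\<lambda>t. tp k q t * tp (-M) q (-t)) has_integral 0) {A..B}"
    by (rule has_integral_spike_finite[of "{}" _ _ "\<lambda>t. 0"]) (use False in \<open>auto simp: tp_def\<close>)
  then show ?thesis using False by (simp add: tp_def)
qed

lemma tp_refl: "tp (real l) q (real p + 1 - (t + d)) = tp (-(real p + 1 - d - real l)) q (-t)"
  by (simp add: tp_def algebra_simps)

lemma tp_add: "tp k m (X - real l) = tp (k + real l) m X"
  by (simp add: tp_def algebra_simps)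

lemma aux_mul: "x * y = s / dd \<Longrightarrow> x * (a * y) = a / dd * (s::real)"
proof -
  assume h: "x * y = s / dd"
  have "x * (a * y) = a * (x * y)" by (simp add: mult_ac)
  also have "\<dots> = a / dd * s" using h by simp
  finally show ?thesis .
qed

lemma core_conv:
  assumes "r \<le> p" "A \<le> 0" "real p + 1 - d \<le> B"
  shows "((\<lambda>t. Bx p r t * ((-1) ^ r * Bx p r (real p + 1 - (t + d)))) has_integral
           ((-1) ^ r * Bx (2 * p + 1) (2 * r) (real p + 1 - d))) {A..B}"
proof -
  define q where "q = p - r"
  define c where "c k = (-1) ^ k * real (Suc p choose k)" for k :: nat
  define \<beta> where "\<beta> = fact q ^ 2 / (fact (2 * q + 1) :: real)"
  define Ml where "Ml l = real p + 1 - d - real l" for l :: nat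
  have eqf: "Bx p r t * ((-1) ^ r * Bx p r (real p + 1 - (t + d))) =
    (-1) ^ r / (fact q * fact q) * (\<Sum>k\<le>Suc p. \<Sum>l\<le>Suc p. (c k * c l) * (tp (real k) q t * tp (- Ml l) q (-t)))" for t
  proof -
    have "Bx p r t * Bx p r (real p + 1 - (t + d)) =
       (\<Sum>k\<le>Suc p. c k * tp (real k) q t) * (\<Sum>l\<le>Suc p. c l * tp (- Ml l) q (-t)) / (fact q * fact q)"
      unfolding Bx_def c_def q_def Ml_def tp_refl by simp
    also have "\<dots> = (\<Sum>k\<le>Suc p. \<Sum>l\<le>Suc p. (c k * c l) * (tp (real k) q t * tp (- Ml l) q (-t))) / (fact q * fact q)"
      by (simp add: sum_product mult_ac del: sum.atMost_Suc)
    finally show ?thesis by (rule aux_mul)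
  qed
  have int: "((\<lambda>t. \<Sum>k\<le>Suc p. \<Sum>l\<le>Suc p. (c k * c l) * (tp (real k) q t * tp (- Ml l) q (-t))) has_integral
     (\<Sum>k\<le>Suc p. \<Sum>l\<le>Suc p. (c k * c l) * (\<beta> * tp (real k) (2 * q + 1) (Ml l)))) {A..B}"
  proof (intro has_integral_sum finite_atMost has_integral_mult_right)
    fix k l assume "k \<in> {..Suc p}" "l \<in> {..Suc p}"
    show "((\<lambda>t. tp (real k) q t * tp (- Ml l) q (- t)) has_integral \<beta> * tp (real k) (2 * q + 1) (Ml l)) {A..B}"
      unfolding \<beta>_def by (rule pair_int) (use assms in \<open>auto simp: Ml_def\<close>)
  qed
  have val: "(-1) ^ r / (fact q * fact q) * (\<Sum>k\<le>Suc p. \<Sum>l\<le>Suc p. (c k * c l) * (\<beta> * tp (real k) (2 * q + 1) (Ml l)))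
      = (-1) ^ r * Bx (2 * p + 1) (2 * r) (real p + 1 - d)"
  proof -
    have "(\<Sum>k\<le>Suc p. \<Sum>l\<le>Suc p. (c k * c l) * (\<beta> * tp (real k) (2 * q + 1) (Ml l)))
      = \<beta> * (\<Sum>k\<le>Suc p. \<Sum>l\<le>Suc p. real (Suc p choose k) * real (Suc p choose l) *
            ((-1) ^ (k + l) * tp (real (k + l)) (2 * q + 1) (real p + 1 - d)))"
      by (simp add: sum_distrib_left c_def Ml_def tp_add power_add mult_ac del: sum.atMost_Suc)
    also have "\<dots> = \<beta> * (\<Sum>j\<le>Suc p + Suc p. real ((Suc p + Suc p) choose j) *
            ((-1) ^ j * tp (real j) (2 * q + 1) (real p + 1 - d)))"
      by (subst vander_sum) simp
    also have "\<dots> = \<beta> * (\<Sum>j\<le>Suc (2 * p + 1). (-1) ^ j * real (Suc (2 * p + 1) choose j) *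
            tp (real j) (2 * p + 1 - 2 * r) (real p + 1 - d))"
    proof -
      have e1: "Suc (2 * p + 1) = Suc p + Suc p" by simp
      have e2: "2 * p + 1 - 2 * r = 2 * q + 1" using assms(1) by (simp add: q_def)
      show ?thesis unfolding e1 e2 by (simp add: mult_ac del: sum.atMost_Suc)
    qed
    finally have s: "(\<Sum>k\<le>Suc p. \<Sum>l\<le>Suc p. (c k * c l) * (\<beta> * tp (real k) (2 * q + 1) (Ml l)))
      = \<beta> * (\<Sum>j\<le>Suc (2 * p + 1). (-1) ^ j * real (Suc (2 * p + 1) choose j) *
            tp (real j) (2 * p + 1 - 2 * r) (real p + 1 - d))" .
    define S where "S = (\<Sum>j\<le>Suc (2 * p + 1). (-1) ^ j * real (Suc (2 * p + 1) choose j) *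
            tp (real j) (2 * p + 1 - 2 * r) (real p + 1 - d))"
    have bx: "Bx (2 * p + 1) (2 * r) (real p + 1 - d) = S / fact (2 * q + 1)"
    proof -
      have e2: "2 * p + 1 - 2 * r = 2 * q + 1" using assms(1) by (simp add: q_def)
      show ?thesis unfolding Bx_def S_def e2 ..
    qed
    have fq: "fact q * fact q \<noteq> (0::real)" by simp
    show ?thesis
      apply (subst s)
      apply (unfold S_def[symmetric] bx \<beta>_def)
      using fq by (simp add: power2_eq_square)
  qed
  show ?thesis
    using int[THEN has_integral_mult_right, of "(-1) ^ r / (fact q * fact q)"] unfolding val
    by (simp add: eqf)
qed



lemma conv:
  assumes "r \<le> p" "p \<ge> 1" "A \<le> 0" "real p + 1 \<le> B"
  shows "((\<lambda>t. Bs p r t * Bs p r (t + d)) has_integral ((-1) ^ r * Bx (2 * p + 1) (2 * r) (real p + 1 - d))) {A..B}"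
proof -
  define B' where "B' = max B (real p + 1 - d)"
  define V where "V = (-1) ^ r * Bx (2 * p + 1) (2 * r) (real p + 1 - d)"
  have h1: "((\<lambda>t. Bx p r t * ((-1) ^ r * Bx p r (real p + 1 - (t + d)))) has_integral V) {A..B'}"
    unfolding V_def by (rule core_conv) (use assms in \<open>auto simp: B'_def\<close>)
  define E where "E = Zs p \<union> (\<lambda>z. real p + 1 - d - z) ` Zs p"
  have finE: "finite E" by (simp add: E_def finite_Zs)
  have h2: "((\<lambda>t. Bs p r t * Bs p r (t + d)) has_integral V) {A..B'}"
  proof (rule has_integral_spike_finite[OF finE _ h1])
    fix t assume t: "t \<in> {A..B'} - E"
    then have t1: "t \<notin> Zs p" by (simp add: E_def)
    have t2: "real p + 1 - (t + d) \<notin> Zs p"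
    proof
      assume "real p + 1 - (t + d) \<in> Zs p"
      then have "t \<in> (\<lambda>z. real p + 1 - d - z) ` Zs p" by (rule rev_image_eqI) simp
      with t show False by (simp add: E_def)
    qed
    have "Bs p r (t + d) = (-1) ^ r * Bs p r (real p + 1 - (t + d))"
    proof -
      have "((-1::real) ^ r) * (-1) ^ r = 1" by (simp add: power_mult_distrib[symmetric])
      then show ?thesis using Bs_sym[of p r "t + d"] by (simp add: mult.assoc[symmetric])
    qed
    then show "Bs p r t * Bs p r (t + d) = Bx p r t * ((-1) ^ r * Bx p r (real p + 1 - (t + d)))"
      using Bs_eq[OF assms(1,2) t1] Bs_eq[OF assms(1,2) t2] by simp
  qed
  have BB': "B \<le> B'" by (simp add: B'_def)
  have AB: "A \<le> B" using assms by simp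
  have "(\<lambda>t. Bs p r t * Bs p r (t + d)) integrable_on {A..B}"
    by (rule integrable_subinterval_real[OF has_integral_integrable[OF h2]]) (use BB' in auto)
  then obtain I where I: "((\<lambda>t. Bs p r t * Bs p r (t + d)) has_integral I) {A..B}"
    by (auto simp: integrable_on_def)
  have h4: "((\<lambda>t. Bs p r t * Bs p r (t + d)) has_integral 0) {B..B'}"
  proof (rule has_integral_spike_finite[of "{real p + 1}" _ _ "\<lambda>t. 0"])
    fix t assume "t \<in> {B..B'} - {real p + 1}"
    then have "t > real p + 1" using assms by auto
    then show "Bs p r t * Bs p r (t + d) = 0" using Bs_zero[OF assms(1,2)] by simp
  qed auto
  have "((\<lambda>t. Bs p r t * Bs p r (t + d)) has_integral (I + 0)) {A..B'}"
    by (rule has_integral_combine[OF AB BB' I h4])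
  then have "I + 0 = V" by (rule has_integral_unique[OF _ h2])
  then have "I = V" by simp
  with I show ?thesis by (simp add: V_def)
qed

definition psi :: "nat \<Rightarrow> nat \<Rightarrow> nat \<Rightarrow> real \<Rightarrow> real \<Rightarrow> real" where
  "psi p r n c x = real n ^ r * Bs p r (real n * x - c + (real p + 1) / 2)"

lemma KI:
  assumes "r \<le> p" "p \<ge> 1" "n > 0" "X0 \<le> X1"
    and "real n * X0 - c + (real p + 1) / 2 \<le> 0" "real p + 1 \<le> real n * X1 - c + (real p + 1) / 2"
  shows "((\<lambda>x. psi p r n c x * psi p r n v x) has_integral
           (real n ^ (2 * r) / real n * ((-1) ^ r * Bx (2 * p + 1) (2 * r) (real p + 1 - (c - v))))) {X0..X1}"
proof -
  define h where "h = (real p + 1) / 2"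
  define V where "V = (-1) ^ r * Bx (2 * p + 1) (2 * r) (real p + 1 - (c - v))"
  have c1: "((\<lambda>t. Bs p r t * Bs p r (t + (c - v))) has_integral V) (cbox (real n * X0 - c + h) (real n * X1 - c + h))"
    unfolding V_def h_def using conv[OF assms(1,2) assms(5,6)] by simp
  have n0: "real n > 0" using assms by simp
  note c2 = has_integral_affinity'[OF c1 n0, of "- c + h"]
  have e: "((real n * X0 - c + h) - (- c + h)) /\<^sub>R real n = X0" "((real n * X1 - c + h) - (- c + h)) /\<^sub>R real n = X1"
    using n0 by auto
  have c3: "((\<lambda>x. Bs p r (real n * x + (- c + h)) * Bs p r (real n * x + (- c + h) + (c - v))) has_integral V / real n) {X0..X1}"
    using c2 unfolding e by (simp add: divide_inverse mult.commute)
  note c4 = has_integral_mult_right[OF c3, of "real n ^ (2 * r)"]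
  show ?thesis
  proof (rule has_integral_spike_finite[OF finite.emptyI _ c4[THEN has_integral_eq_rhs]])
    fix x assume "x \<in> {X0..X1} - {}"
    show "psi p r n c x * psi p r n v x = real n ^ (2 * r) * (Bs p r (real n * x + (- c + h)) * Bs p r (real n * x + (- c + h) + (c - v)))"
    proof -
      have a1: "real n * x - c + (real p + 1) / 2 = real n * x + (- c + h)" by (simp add: h_def)
      have a2: "real n * x - v + (real p + 1) / 2 = real n * x + (- c + h) + (c - v)" by (simp add: h_def)
      have a3: "real n ^ (2 * r) = real n ^ r * real n ^ r" by (simp add: mult_2 power_add)
      show ?thesis unfolding psi_def a1 a2 a3 by (simp only: mult_ac)
    qed
  qed (simp add: V_def)
qed

lemma psi_neg: "psi p r n (- c) (- y) = (-1) ^ r * psi p r n c y"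
proof -
  have "real n * - y - - c + (real p + 1) / 2 = real p + 1 - (real n * y - c + (real p + 1) / 2)"
    by (simp add: field_simps)
  then show ?thesis unfolding psi_def by (simp only: Bs_sym mult_ac)
qed

lemma psi_refl2: "psi p r n (2 * real n - c) (2 - y) = (-1) ^ r * psi p r n c y"
proof -
  have "real n * (2 - y) - (2 * real n - c) + (real p + 1) / 2 = real p + 1 - (real n * y - c + (real p + 1) / 2)"
    by (simp add: field_simps)
  then show ?thesis unfolding psi_def by (simp only: Bs_sym mult_ac)
qed

lemma psi_zero:
  assumes "r \<le> p" "p \<ge> 1"
    and "real n * x - c + (real p + 1) / 2 < 0 \<or> real n * x - c + (real p + 1) / 2 > real p + 1"
  shows "psi p r n c x = 0"
  unfolding psi_def using Bs_zero[OF assms] by simp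



lemma split3:
  fixes f :: "real \<Rightarrow> real"
  assumes "(f has_integral K) {-1..2}"
  obtains I1 I2 I3 where "(f has_integral I1) {-1..0}" "(f has_integral I2) {0..1}"
    "(f has_integral I3) {1..2}" "K = I1 + I2 + I3"
proof -
  have int: "f integrable_on {-1..2}" using assms by blast
  have "f integrable_on {-1..0}" by (rule integrable_subinterval_real[OF int]) auto
  then obtain I1 where I1: "(f has_integral I1) {-1..0}" by (auto simp: integrable_on_def)
  have "f integrable_on {0..1}" by (rule integrable_subinterval_real[OF int]) auto
  then obtain I2 where I2: "(f has_integral I2) {0..1}" by (auto simp: integrable_on_def)
  have "f integrable_on {1..2}" by (rule integrable_subinterval_real[OF int]) auto
  then obtain I3 where I3: "(f has_integral I3) {1..2}" by (auto simp: integrable_on_def)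
  have I23: "(f has_integral (I2 + I3)) {0..2}" by (rule has_integral_combine[OF _ _ I2 I3]) auto
  have "(f has_integral (I1 + (I2 + I3))) {-1..2}" by (rule has_integral_combine[OF _ _ I1 I23]) auto
  then have "K = I1 + I2 + I3" using has_integral_unique[OF assms] by simp
  with I1 I2 I3 that show ?thesis by blast
qed

lemma psi_neg': "psi p r n c (- x) = (-1) ^ r * psi p r n (- c) x"
  using psi_neg[of p r n "- c" x] by simp

lemma psi_refl2': "psi p r n c (2 - x) = (-1) ^ r * psi p r n (2 * real n - c) x"
  using psi_refl2[of p r n "2 * real n - c" x] by simp

lemma alg3: "s * s = (1::real) \<Longrightarrow> A * (X + Y + Z) = s * A * (s * X) + s * A * (s * Y) + s * A * (s * Z)"
proof -
  assume h: "s * s = 1"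
  have "s * A * (s * X) + s * A * (s * Y) + s * A * (s * Z) = (s * s) * (A * (X + Y + Z))"
    by (simp add: algebra_simps)
  then show ?thesis using h by simp
qed

lemma m1sq: "((-1::real) ^ r) * (-1) ^ r = 1"
  by (simp add: power_mult_distrib[symmetric])

definition F3 :: "nat \<Rightarrow> nat \<Rightarrow> nat \<Rightarrow> real \<Rightarrow> real \<Rightarrow> real" where
  "F3 p r n c x = psi p r n c x + psi p r n (- c) x + psi p r n (2 * real n - c) x"

context
  fixes p r n :: nat and a b :: real
  assumes rp: "r \<le> p" and p1: "p \<ge> 1" and np: "real p + 1 \<le> real n"
    and a0: "0 < a" and an: "a < real n" and b0: "0 < b" and bn: "b < real n"
begin

abbreviation "\<psi> \<equiv> psi p r n"
abbreviation "W d \<equiv> (-1) ^ r * Bx (2 * p + 1) (2 * r) (real p + 1 - d)"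

lemma n0: "n > 0" using np by simp

lemma KIa: "((\<lambda>x. \<psi> a x * \<psi> v x) has_integral (real n ^ (2 * r) / real n * W (a - v))) {-1..2}"
  by (rule KI[OF rp p1 n0]) (use np a0 an in \<open>auto simp: field_simps\<close>)

lemma Z1: "x \<le> 0 \<Longrightarrow> \<psi> (2 * real n - b) x = 0"
proof -
  assume x: "x \<le> 0"
  have "real n * x \<le> 0" using x by (simp add: mult_nonneg_nonpos)
  then have "real n * x - (2 * real n - b) + (real p + 1) / 2 < 0" using np bn by (simp add: field_simps)
  then show ?thesis by (intro psi_zero[OF rp p1] disjI1)
qed

lemma Z2: "x \<le> 0 \<Longrightarrow> \<psi> a x * \<psi> (b - 2 * real n) x = 0"
proof (cases "real n * x - a + (real p + 1) / 2 < 0")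
  case True then show ?thesis using psi_zero[OF rp p1, of n x a] by simp
next
  case False
  then have "real n * x - (b - 2 * real n) + (real p + 1) / 2 > real p + 1"
    using np a0 bn by linarith
  then show ?thesis using psi_zero[OF rp p1, of n x "b - 2 * real n"] by simp
qed

lemma Z3: "x \<ge> 1 \<Longrightarrow> \<psi> (- b) x = 0"
proof -
  assume x: "x \<ge> 1"
  have "real n * x \<ge> real n" using x by (simp add: mult_left_mono[of 1 x "real n", simplified])
  then have "real n * x + b + (real p + 1) / 2 > real p + 1" using np b0 of_nat_0_le_iff[of p, where ?'a=real] by argo
  then have "real n * x - (- b) + (real p + 1) / 2 > real p + 1" by simp
  then show ?thesis by (intro psi_zero[OF rp p1] disjI2)
qed

lemma Z4: "x \<ge> 1 \<Longrightarrow> \<psi> a x * \<psi> (2 * real n + b) x = 0"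
proof (cases "real n * x - a + (real p + 1) / 2 > real p + 1")
  case True then show ?thesis using psi_zero[OF rp p1, of n x a] by simp
next
  case False
  then have "real n * x - (2 * real n + b) + (real p + 1) / 2 < 0"
    using np an b0 by linarith
  then show ?thesis using psi_zero[OF rp p1, of n x "2 * real n + b"] by simp
qed


lemma fold:
  "((\<lambda>x. F3 p r n a x * F3 p r n b x) has_integral
     (real n ^ (2 * r) / real n * (W (a - b) + W (a + b) + W (a + b - 2 * real n)))) {0..1}"
proof -
  define C where "C = real n ^ (2 * r) / real n"
  obtain Jm1 J01 Jp1 where j1: "((\<lambda>x. \<psi> a x * \<psi> b x) has_integral Jm1) {-1..0}"
     "((\<lambda>x. \<psi> a x * \<psi> b x) has_integral J01) {0..1}" "((\<lambda>x. \<psi> a x * \<psi> b x) has_integral Jp1) {1..2}"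
     "real n ^ (2 * r) / real n * W (a - b) = Jm1 + J01 + Jp1"
    by (rule split3[OF KIa[of b]])
  obtain Jm2 J02 Jp2 where j2: "((\<lambda>x. \<psi> a x * \<psi> (-b) x) has_integral Jm2) {-1..0}"
     "((\<lambda>x. \<psi> a x * \<psi> (-b) x) has_integral J02) {0..1}" "((\<lambda>x. \<psi> a x * \<psi> (-b) x) has_integral Jp2) {1..2}"
     "real n ^ (2 * r) / real n * W (a - - b) = Jm2 + J02 + Jp2"
    by (rule split3[OF KIa[of "-b"]])
  obtain Jm3 J03 Jp3 where j3: "((\<lambda>x. \<psi> a x * \<psi> (2 * real n - b) x) has_integral Jm3) {-1..0}"
     "((\<lambda>x. \<psi> a x * \<psi> (2 * real n - b) x) has_integral J03) {0..1}" "((\<lambda>x. \<psi> a x * \<psi> (2 * real n - b) x) has_integral Jp3) {1..2}"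
     "real n ^ (2 * r) / real n * W (a - (2 * real n - b)) = Jm3 + J03 + Jp3"
    by (rule split3[OF KIa[of "2 * real n - b"]])
  have e2: "a - - b = a + b" "a - (2 * real n - b) = a + b - 2 * real n" by simp_all
  note j2(4)[unfolded e2 C_def[symmetric]] j3(4)[unfolded e2 C_def[symmetric]] j1(4)[unfolded C_def[symmetric]]
  then have j2': "C * W (a + b) = Jm2 + J02 + Jp2" and j3': "C * W (a + b - 2 * real n) = Jm3 + J03 + Jp3"
     and j1': "C * W (a - b) = Jm1 + J01 + Jp1" by blast+
  have Jm3: "Jm3 = 0"
  proof -
    have "((\<lambda>x. \<psi> a x * \<psi> (2 * real n - b) x) has_integral 0) {-1..0}"
      by (rule has_integral_spike_finite[of "{}" _ _ "\<lambda>x. 0"]) (auto simp: Z1)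
    then show ?thesis using has_integral_unique[OF j3(1)] by simp
  qed
  have Jp2: "Jp2 = 0"
  proof -
    have "((\<lambda>x. \<psi> a x * \<psi> (-b) x) has_integral 0) {1..2}"
      by (rule has_integral_spike_finite[of "{}" _ _ "\<lambda>x. 0"]) (auto simp: Z3)
    then show ?thesis using has_integral_unique[OF j2(3)] by simp
  qed
  have z2: "((\<lambda>x. \<psi> a x * \<psi> (b - 2 * real n) x) has_integral 0) {-1..0}"
    by (rule has_integral_spike_finite[of "{}" _ _ "\<lambda>x. 0"]) (auto simp: Z2)
  have z4: "((\<lambda>x. \<psi> a x * \<psi> (2 * real n + b) x) has_integral 0) {1..2}"
    by (rule has_integral_spike_finite[of "{}" _ _ "\<lambda>x. 0"]) (auto simp: Z4)
  have P0: "((\<lambda>x. \<psi> a x * F3 p r n b x) has_integral (J01 + J02 + J03)) {0..1}"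
    unfolding F3_def distrib_left by (intro has_integral_add j1(2) j2(2) j3(2))
  have Pm: "((\<lambda>x. \<psi> (- a) x * F3 p r n b x) has_integral (Jm2 + Jm1 + 0)) {0..1}"
  proof -
    have g: "((\<lambda>y. \<psi> a y * \<psi> (- b) y + \<psi> a y * \<psi> b y + \<psi> a y * \<psi> (b - 2 * real n) y) has_integral (Jm2 + Jm1 + 0)) {-1..0}"
      by (intro has_integral_add j1(1) j2(1) z2)
    define G where "G y = \<psi> a y * \<psi> (- b) y + \<psi> a y * \<psi> b y + \<psi> a y * \<psi> (b - 2 * real n) y" for y
    have gG: "(G has_integral (Jm2 + Jm1 + 0)) {-1..0}" unfolding G_def[abs_def] using g .
    have "((\<lambda>x. G (-x)) has_integral (Jm2 + Jm1 + 0)) {0..1}"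
      using has_integral_reflect_real[of G "Jm2 + Jm1 + 0" 0 "-1"] gG by simp
    then have g2: "((\<lambda>x. \<psi> a (-x) * \<psi> (- b) (-x) + \<psi> a (-x) * \<psi> b (-x) + \<psi> a (-x) * \<psi> (b - 2 * real n) (-x)) has_integral (Jm2 + Jm1 + 0)) {0..1}"
      unfolding G_def by simp
    show ?thesis
    proof (rule has_integral_spike_finite[OF finite.emptyI _ g2])
      fix x :: real assume "x \<in> {0..1} - {}"
      have e: "- (b - 2 * real n) = 2 * real n - b" by simp
      show "\<psi> (- a) x * F3 p r n b x = \<psi> a (-x) * \<psi> (- b) (-x) + \<psi> a (-x) * \<psi> b (-x) + \<psi> a (-x) * \<psi> (b - 2 * real n) (-x)"
        unfolding F3_def psi_neg'[of p r n _ x] e minus_minus by (rule alg3[OF m1sq])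
    qed
  qed
  have Pp: "((\<lambda>x. \<psi> (2 * real n - a) x * F3 p r n b x) has_integral (Jp3 + 0 + Jp1)) {0..1}"
  proof -
    have g: "((\<lambda>y. \<psi> a y * \<psi> (2 * real n - b) y + \<psi> a y * \<psi> (2 * real n + b) y + \<psi> a y * \<psi> b y) has_integral (Jp3 + 0 + Jp1)) {1..2}"
      by (intro has_integral_add j1(3) j3(3) z4)
    define G where "G y = \<psi> a y * \<psi> (2 * real n - b) y + \<psi> a y * \<psi> (2 * real n + b) y + \<psi> a y * \<psi> b y" for y
    have "((\<lambda>x. G (-x)) has_integral (Jp3 + 0 + Jp1)) {-2..-1}"
      using has_integral_reflect_real[of G _ 2 1] g unfolding G_def by simp
    from has_integral_shift_real_ivl[OF this, of "-2"]
    have g2: "((\<lambda>x. G (2 - x)) has_integral (Jp3 + 0 + Jp1)) {0..1}" by simp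
    show ?thesis
    proof (rule has_integral_spike_finite[OF finite.emptyI _ g2])
      fix x :: real assume "x \<in> {0..1} - {}"
      have e1: "2 * real n - (2 * real n - b) = b" "2 * real n - (2 * real n + b) = - b" by simp_all
      show "\<psi> (2 * real n - a) x * F3 p r n b x = G (2 - x)"
        unfolding F3_def G_def psi_refl2'[of p r n _ x] e1 by (rule alg3[OF m1sq])
    qed
  qed
  have tot: "((\<lambda>x. F3 p r n a x * F3 p r n b x) has_integral ((J01 + J02 + J03) + (Jm2 + Jm1 + 0) + (Jp3 + 0 + Jp1))) {0..1}"
  proof -
    have "((\<lambda>x. \<psi> a x * F3 p r n b x + \<psi> (- a) x * F3 p r n b x + \<psi> (2 * real n - a) x * F3 p r n b x) has_integral
       ((J01 + J02 + J03) + (Jm2 + Jm1 + 0) + (Jp3 + 0 + Jp1))) {0..1}"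
      by (intro has_integral_add P0 Pm Pp)
    moreover have "\<And>x. \<psi> a x * F3 p r n b x + \<psi> (- a) x * F3 p r n b x + \<psi> (2 * real n - a) x * F3 p r n b x = F3 p r n a x * F3 p r n b x"
      unfolding F3_def[of p r n a] by (simp only: distrib_right)
    ultimately show ?thesis by simp
  qed
  have "C * W (a - b) + C * W (a + b) + C * W (a + b - 2 * real n) = (J01 + J02 + J03) + (Jm2 + Jm1 + 0) + (Jp3 + 0 + Jp1)"
    using j1' j2' j3' Jm3 Jp2 by linarith
  then have "C * (W (a - b) + W (a + b) + W (a + b - 2 * real n)) = (J01 + J02 + J03) + (Jm2 + Jm1 + 0) + (Jp3 + 0 + Jp1)"
    by (simp only: distrib_left)
  then show ?thesis using tot unfolding C_def by simp
qed

end



definition psiX :: "nat \<Rightarrow> nat \<Rightarrow> nat \<Rightarrow> real \<Rightarrow> real \<Rightarrow> real" where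
  "psiX p r n c x = real n ^ r * Bx p r (real n * x - c + (real p + 1) / 2)"

definition FamX :: "nat \<Rightarrow> nat \<Rightarrow> nat \<Rightarrow> real \<Rightarrow> real \<Rightarrow> real" where
  "FamX p r n a x = (\<Sum>m\<in>{-1,0,1::int}. psiX p r n (a + 2 * real_of_int m * real n) x
                                        + psiX p r n (- a + 2 * real_of_int m * real n) x)"

definition Ex :: "nat \<Rightarrow> nat \<Rightarrow> real \<Rightarrow> real set" where
  "Ex p n c = (\<lambda>z. (z + c - (real p + 1) / 2) / real n) ` Zs p"

definition EF :: "nat \<Rightarrow> nat \<Rightarrow> real \<Rightarrow> real set" where
  "EF p n a = (\<Union>m\<in>{-1,0,1::int}. Ex p n (a + 2 * real_of_int m * real n) \<union> Ex p n (- a + 2 * real_of_int m * real n))"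

lemma finite_EF: "finite (EF p n a)"
  by (simp add: EF_def Ex_def finite_Zs)

lemma notEx: "n > 0 \<Longrightarrow> x \<notin> Ex p n c \<Longrightarrow> real n * x - c + (real p + 1) / 2 \<notin> Zs p"
proof
  assume n: "n > 0" and x: "x \<notin> Ex p n c" and z: "real n * x - c + (real p + 1) / 2 \<in> Zs p"
  have "x = (real n * x - c + (real p + 1) / 2 + c - (real p + 1) / 2) / real n" using n by simp
  then have "x \<in> Ex p n c" unfolding Ex_def using z by blast
  with x show False by blast
qed

lemma psiX_deriv:
  assumes "n > 0" "Suc r < p \<or> (Suc r = p \<and> x \<notin> Ex p n c)"
  shows "(psiX p r n c has_real_derivative psiX p (Suc r) n c x) (at x)"
proof -
  have cnd: "Suc r < p \<or> (Suc r = p \<and> real n * x - c + (real p + 1) / 2 \<notin> Zs p)"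
    using assms notEx[OF assms(1)] by blast
  have dg: "((\<lambda>x. real n * x - c + (real p + 1) / 2) has_real_derivative real n) (at x)"
    by (auto intro!: derivative_eq_intros)
  have d: "((\<lambda>x. Bx p r (real n * x - c + (real p + 1) / 2)) has_real_derivative
      Bx p (Suc r) (real n * x - c + (real p + 1) / 2) * real n) (at x)"
    using DERIV_chain2[OF Bx_deriv[OF cnd] dg] by simp
  show ?thesis unfolding psiX_def using DERIV_cmult[OF d, of "real n ^ r"] by (simp add: mult_ac)
qed

lemma FamX_deriv:
  assumes "n > 0" "Suc r < p \<or> (Suc r = p \<and> x \<notin> EF p n a)"
  shows "(FamX p r n a has_real_derivative FamX p (Suc r) n a x) (at x)"
  unfolding FamX_def
proof (intro DERIV_sum DERIV_add)
  fix m :: int assume m: "m \<in> {-1, 0, 1}"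
  show "((\<lambda>x. psiX p r n (a + 2 * real_of_int m * real n) x) has_real_derivative psiX p (Suc r) n (a + 2 * real_of_int m * real n) x) (at x)"
    by (rule psiX_deriv[OF assms(1)]) (use assms(2) m in \<open>auto simp: EF_def\<close>)
  show "((\<lambda>x. psiX p r n (- a + 2 * real_of_int m * real n) x) has_real_derivative psiX p (Suc r) n (- a + 2 * real_of_int m * real n) x) (at x)"
    by (rule psiX_deriv[OF assms(1)]) (use assms(2) m in \<open>auto simp: EF_def\<close>)
qed

lemma deriv_from_DERIV: "(\<And>x. (f has_real_derivative g x) (at x)) \<Longrightarrow> deriv f = g"
  by (rule ext) (rule DERIV_imp_deriv)

lemma nth_FamX_lt: "n > 0 \<Longrightarrow> r < p \<Longrightarrow> (deriv ^^ r) (FamX p 0 n a) = FamX p r n a"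
proof (induction r)
  case 0 then show ?case by simp
next
  case (Suc r)
  then have "(deriv ^^ r) (FamX p 0 n a) = FamX p r n a" by simp
  then show ?case using FamX_deriv[OF Suc.prems(1), of r p] Suc.prems
    by (simp add: deriv_from_DERIV)
qed

lemma nth_FamX:
  assumes "n > 0" "r \<le> p" "p \<ge> 1" "x \<notin> EF p n a"
  shows "(deriv ^^ r) (FamX p 0 n a) x = FamX p r n a x"
proof (cases "r < p")
  case True then show ?thesis using nth_FamX_lt[OF assms(1)] by simp
next
  case False
  then have rp: "r = Suc (p - 1)" using assms by simp
  have "(deriv ^^ (p - 1)) (FamX p 0 n a) = FamX p (p - 1) n a"
    using nth_FamX_lt[OF assms(1)] assms by simp
  moreover have "(FamX p (p - 1) n a has_real_derivative FamX p (Suc (p - 1)) n a x) (at x)"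
    by (rule FamX_deriv[OF assms(1)]) (use assms in simp)
  ultimately show ?thesis unfolding rp by (simp add: DERIV_imp_deriv)
qed

lemma nth_Bx_lt: "r < P \<Longrightarrow> (deriv ^^ r) (Bx P 0) = Bx P r"
proof (induction r)
  case 0 then show ?case by simp
next
  case (Suc r)
  then have "(deriv ^^ r) (Bx P 0) = Bx P r" by simp
  then show ?case using Bx_deriv[of r P] Suc.prems by (simp add: deriv_from_DERIV)
qed

lemma deriv_local:
  fixes f g :: "real \<Rightarrow> real"
  assumes "open U" "\<And>y. y \<in> U \<Longrightarrow> f y = g y" "x \<in> U"
  shows "(deriv ^^ r) f x = (deriv ^^ r) g x"
  using assms(3)
proof (induction r arbitrary: x)
  case 0 then show ?case using assms by simp
next
  case (Suc r)
  have "(\<lambda>D. ((deriv ^^ r) f has_real_derivative D) (at x)) = (\<lambda>D. ((deriv ^^ r) g has_real_derivative D) (at x))"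
  proof (rule ext, rule iffI)
    fix D assume "((deriv ^^ r) f has_real_derivative D) (at x)"
    then show "((deriv ^^ r) g has_real_derivative D) (at x)"
      by (rule has_field_derivative_transform_within_open[OF _ assms(1) Suc.prems]) (use Suc.IH in auto)
  next
    fix D assume "((deriv ^^ r) g has_real_derivative D) (at x)"
    then show "((deriv ^^ r) f has_real_derivative D) (at x)"
      by (rule has_field_derivative_transform_within_open[OF _ assms(1) Suc.prems]) (use Suc.IH in auto)
  qed
  then have "deriv ((deriv ^^ r) f) x = deriv ((deriv ^^ r) g) x"
    unfolding deriv_def[of "(deriv ^^ r) f" x] deriv_def[of "(deriv ^^ r) g" x] by (rule arg_cong[where f=Eps])
  then show ?case by simp
qed



lemma centredB_psiX: "centredB p n c x = psiX p 0 n c x"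
  by (simp add: centredB_def psiX_def cardB_Bx)

lemma NB_eq:
  assumes np: "real p + 1 \<le> real n" and a0: "0 < a" and an: "a < real n"
    and x: "-1 < x" "x < 2"
  shows "(\<Sum>\<^sub>\<infinity>m::int. centredB p n (a + 2 * real_of_int m * real n) x
                  + centredB p n (- a + 2 * real_of_int m * real n) x) = FamX p 0 n a x"
proof -
  have n0: "real n > 0" using np by linarith
  have nx1: "real n * x < 2 * real n" using x n0 by simp
  have nx2: "real n * x > - real n" using mult_strict_left_mono[of "-1" x "real n"] x n0 by simp
  have zero: "centredB p n (a + 2 * real_of_int m * real n) x + centredB p n (- a + 2 * real_of_int m * real n) x = 0"
    if m: "m \<notin> {-1, 0, 1}" for m :: int
  proof (cases "m \<ge> 2")
    case True
    then have "real_of_int m \<ge> 2" by simp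
    then have mm: "2 * real_of_int m * real n \<ge> 4 * real n" using n0 by (simp add: mult_right_mono)
    have "real n * x - (a + 2 * real_of_int m * real n) + (real p + 1) / 2 < 0"
         "real n * x - (- a + 2 * real_of_int m * real n) + (real p + 1) / 2 < 0"
      using mm nx1 np a0 an of_nat_0_le_iff[of p, where ?'a=real] by argo+
    then show ?thesis unfolding centredB_def using cardB_zero by simp
  next
    case False
    then have "m \<le> -2" using m by auto
    then have "real_of_int m \<le> -2" by simp
    then have "real_of_int m * real n \<le> -2 * real n" using mult_right_mono[of "real_of_int m" "-2" "real n"] n0 by simp
    then have mm: "2 * real_of_int m * real n \<le> - 4 * real n" by simp
    have "real n * x - (a + 2 * real_of_int m * real n) + (real p + 1) / 2 \<ge> real p + 1"
         "real n * x - (- a + 2 * real_of_int m * real n) + (real p + 1) / 2 \<ge> real p + 1"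
      using mm nx2 np a0 an of_nat_0_le_iff[of p, where ?'a=real] by argo+
    then show ?thesis unfolding centredB_def using cardB_zero by simp
  qed
  have "(\<Sum>\<^sub>\<infinity>m::int. centredB p n (a + 2 * real_of_int m * real n) x
                  + centredB p n (- a + 2 * real_of_int m * real n) x)
    = (\<Sum>\<^sub>\<infinity>m\<in>{-1,0,1::int}. centredB p n (a + 2 * real_of_int m * real n) x
                  + centredB p n (- a + 2 * real_of_int m * real n) x)"
    by (rule infsum_cong_neutral) (use zero in auto)
  also have "\<dots> = FamX p 0 n a x"
    unfolding FamX_def centredB_psiX by (rule infsum_finite) simp
  finally show ?thesis .
qed

lemma sum3: "(\<Sum>m\<in>{-1,0,1::int}. f m) = f (-1) + f 0 + (f 1 :: real)"
  by simp

lemma FamX_F3: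
  assumes rp: "r \<le> p" and p1: "p \<ge> 1" and np: "real p + 1 \<le> real n" and a0: "0 < a" and an: "a < real n"
    and x: "0 \<le> x" "x \<le> 1" "x \<notin> EF p n a"
  shows "FamX p r n a x = F3 p r n a x"
proof -
  have n0: "n > 0" using np by simp
  have eq: "psiX p r n c x = psi p r n c x" if "x \<notin> Ex p n c" for c
    unfolding psiX_def psi_def using Bs_eq[OF rp p1 notEx[OF n0 that]] by simp
  have nxa: "0 \<le> real n * x" "real n * x \<le> real n" using x n0 by (simp_all add: mult_left_le)
  have p0: "(0::real) \<le> real p" by simp
  have z1: "psi p r n (a - 2 * real n) x = 0"
    by (rule psi_zero[OF rp p1], rule disjI2) (use nxa np a0 an p0 in argo)
  have z2: "psi p r n (- a - 2 * real n) x = 0"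
    by (rule psi_zero[OF rp p1], rule disjI2) (use nxa np a0 an p0 in argo)
  have z3: "psi p r n (a + 2 * real n) x = 0"
    by (rule psi_zero[OF rp p1], rule disjI1) (use nxa np a0 an p0 in argo)
  have "FamX p r n a x = (\<Sum>m\<in>{-1,0,1::int}. psi p r n (a + 2 * real_of_int m * real n) x
                                        + psi p r n (- a + 2 * real_of_int m * real n) x)"
    unfolding FamX_def using x(3) by (intro sum.cong refl) (auto simp: EF_def eq)
  also have "\<dots> = (psi p r n (a + 2 * real_of_int (-1) * real n) x + psi p r n (- a + 2 * real_of_int (-1) * real n) x)
     + (psi p r n (a + 2 * real_of_int 0 * real n) x + psi p r n (- a + 2 * real_of_int 0 * real n) x)
     + (psi p r n (a + 2 * real_of_int 1 * real n) x + psi p r n (- a + 2 * real_of_int 1 * real n) x)"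
    by (simp only: sum3)
  also have "\<dots> = (psi p r n (a - 2 * real n) x + psi p r n (- a - 2 * real n) x)
     + (psi p r n a x + psi p r n (- a) x) + (psi p r n (a + 2 * real n) x + psi p r n (2 * real n - a) x)"
  proof -
    have cs: "a + 2 * real_of_int (-1) * real n = a - 2 * real n" "- a + 2 * real_of_int (-1) * real n = - a - 2 * real n"
      "a + 2 * real_of_int 0 * real n = a" "- a + 2 * real_of_int 0 * real n = - a"
      "a + 2 * real_of_int 1 * real n = a + 2 * real n" "- a + 2 * real_of_int 1 * real n = 2 * real n - a" by simp_all
    show ?thesis unfolding cs ..
  qed
  also have "\<dots> = psi p r n a x + psi p r n (- a) x + psi p r n (2 * real n - a) x"
    unfolding z1 z2 z3 by simp
  finally show ?thesis by (simp add: F3_def)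
qed



lemma W_sym:
  assumes rp: "r \<le> p" and p1: "p \<ge> 1"
  shows "Bx (2 * p + 1) (2 * r) (real p + 1 - (- d)) = Bx (2 * p + 1) (2 * r) (real p + 1 - d)"
proof -
  define A where "A = - \<bar>d\<bar>"
  define B where "B = real p + 1 + \<bar>d\<bar>"
  have c1: "((\<lambda>t. Bs p r t * Bs p r (t + d)) has_integral ((-1) ^ r * Bx (2 * p + 1) (2 * r) (real p + 1 - d))) {A..B}"
    by (rule conv[OF rp p1]) (auto simp: A_def B_def)
  have c2: "((\<lambda>t. Bs p r t * Bs p r (t + - d)) has_integral ((-1) ^ r * Bx (2 * p + 1) (2 * r) (real p + 1 - - d))) {A + d..B + d}"
    by (rule conv[OF rp p1]) (auto simp: A_def B_def)
  have c3: "((\<lambda>t. Bs p r t * Bs p r (t + d)) has_integral ((-1) ^ r * Bx (2 * p + 1) (2 * r) (real p + 1 - - d))) {A..B}"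
  proof -
    from has_integral_shift_real_ivl[OF c2, of d]
    have "((\<lambda>x. Bs p r (x + d) * Bs p r (x + d + - d)) has_integral ((-1) ^ r * Bx (2 * p + 1) (2 * r) (real p + 1 - - d))) {A + d - d..B + d - d}" .
    then show ?thesis by (simp add: mult.commute)
  qed
  have "((-1::real) ^ r * Bx (2 * p + 1) (2 * r) (real p + 1 - - d)) = (-1) ^ r * Bx (2 * p + 1) (2 * r) (real p + 1 - d)"
    using has_integral_unique[OF c3 c1] .
  then show ?thesis by simp
qed

lemma Bx_zero_nonpos:
  assumes rP: "r < P" and s0: "s \<le> 0"
  shows "Bx P r s = 0"
proof (cases "s < 0")
  case True then show ?thesis by (rule Bx_zero_neg)
next
  case False
  then have s: "s = 0" using s0 by auto
  have "tp (real k) (P - r) 0 = 0" for k using rP by (cases k) (auto simp: tp_def)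
  then show ?thesis by (simp add: Bx_def s)
qed

lemma nth_card: "r < P \<Longrightarrow> nth_deriv r (cardBspline P) = Bx P r"
proof -
  assume "r < P"
  have "cardBspline P = Bx P 0" by (rule ext) (simp add: cardB_Bx)
  then show ?thesis unfolding nth_deriv_def using nth_Bx_lt[OF \<open>r < P\<close>] by simp
qed

lemma alpha_eq:
  assumes "r \<le> p"
  shows "alphaSeq p r k = (-1) ^ r * Bx (2 * p + 1) (2 * r) (real p + 1 - real k)"
proof -
  have n: "nth_deriv (2 * r) (cardBspline (2 * p + 1)) = Bx (2 * p + 1) (2 * r)"
    by (rule nth_card) (use assms in simp)
  show ?thesis
  proof (cases "k \<le> p")
    case True then show ?thesis unfolding alphaSeq_def n by simp
  next
    case False
    then have "real p + 1 - real k \<le> 0" by simp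
    then have "Bx (2 * p + 1) (2 * r) (real p + 1 - real k) = 0"
      by (intro Bx_zero_nonpos) (use assms in simp)
    then show ?thesis using False by (simp add: alphaSeq_def)
  qed
qed

lemma n_bound:
  fixes p n :: nat
  assumes "p \<ge> 1" "n \<ge> max (2 * p - p div 2) (2 * p - 2 * (p div 2) + 1)"
  shows "p + 1 \<le> n"
  using assms by (simp add: max_def split: if_splits)

theorem mainTheorem6:
  fixes p n r :: nat
  assumes "p \<ge> 1" and "n \<ge> 1" and "r \<le> p"
    and "n \<ge> max (2 * p - p div 2) (2 * p - 2 * (p div 2) + 1)"
  shows "\<forall>i\<in>{1..n}. \<forall>j\<in>{1..n}.
    Xmat p r n i j = real n powi (2 * int r - 1) *
      (toeplitzM (alphaSeq p r) i j + hankelM n (alphaSeq p r) i j)"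
proof (intro ballI)
  fix i j assume i: "i \<in> {1..n}" and j: "j \<in> {1..n}"
  have p1: "p \<ge> 1" and rp: "r \<le> p" using assms by auto
  have npn: "p + 1 \<le> n" by (rule n_bound[OF assms(1,4)])
  then have np: "real p + 1 \<le> real n" by simp
  have n0: "n > 0" using npn by simp
  define a where "a = real i - 1 / 2"
  define b where "b = real j - 1 / 2"
  have a0: "0 < a" and an: "a < real n" using i by (auto simp: a_def)
  have b0: "0 < b" and bn: "b < real n" using j by (auto simp: b_def)
  define W where "W d = (-1) ^ r * Bx (2 * p + 1) (2 * r) (real p + 1 - d)" for d
  have Wsym: "W (- d) = W d" for d unfolding W_def using W_sym[OF rp p1] by simp
  have nd: "nth_deriv r (neumannBasis p n k) x = FamX p r n c x"
    if "x \<in> {0..1}" "x \<notin> EF p n c" "c = real k - 1 / 2" "0 < c" "c < real n" for k x c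
  proof -
    have "(deriv ^^ r) (neumannBasis p n k) x = (deriv ^^ r) (FamX p 0 n c) x"
    proof (rule deriv_local[of "{-1<..<2}"])
      fix y :: real assume "y \<in> {-1<..<2}"
      then show "neumannBasis p n k y = FamX p 0 n c y"
        unfolding neumannBasis_def that(3)[symmetric] using NB_eq[OF np that(4,5)] by auto
    qed (use that in auto)
    also have "\<dots> = FamX p r n c x" by (rule nth_FamX[OF n0 rp p1 that(2)])
    finally show ?thesis by (simp add: nth_deriv_def)
  qed
  have fold': "((\<lambda>x. F3 p r n a x * F3 p r n b x) has_integral
     (real n ^ (2 * r) / real n * (W (a - b) + W (a + b) + W (a + b - 2 * real n)))) {0..1}"
    using fold[OF rp p1 np a0 an b0 bn] unfolding W_def .
  have hi: "((\<lambda>x. nth_deriv r (neumannBasis p n i) x * nth_deriv r (neumannBasis p n j) x) has_integral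
     (real n ^ (2 * r) / real n * (W (a - b) + W (a + b) + W (a + b - 2 * real n)))) {0..1}"
  proof (rule has_integral_spike_finite[OF _ _ fold'])
    show "finite (EF p n a \<union> EF p n b)" by (simp add: finite_EF)
    fix x assume x: "x \<in> {0..1} - (EF p n a \<union> EF p n b)"
    then show "nth_deriv r (neumannBasis p n i) x * nth_deriv r (neumannBasis p n j) x = F3 p r n a x * F3 p r n b x"
      using nd[of x a i] nd[of x b j] FamX_F3[OF rp p1 np a0 an, of x] FamX_F3[OF rp p1 np b0 bn, of x]
        a0 an b0 bn by (auto simp: a_def b_def)
  qed
  have X: "Xmat p r n i j = real n ^ (2 * r) / real n * (W (a - b) + W (a + b) + W (a + b - 2 * real n))"
    unfolding Xmat_def using integral_unique[OF hi] .
  have pw: "real n powi (2 * int r - 1) = real n ^ (2 * r) / real n"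
  proof -
    have "real n powi (2 * int r - 1) = real n powi (int (2 * r)) / real n powi 1"
      using power_int_diff[of "real n" "int (2 * r)" 1] n0 by (simp del: power_int_of_nat)
    moreover have "real n powi (int (2 * r)) = real n ^ (2 * r)" by (rule power_int_of_nat)
    ultimately show ?thesis by simp
  qed
  have T: "toeplitzM (alphaSeq p r) i j = W (a - b)"
  proof (cases "i \<le> j")
    case True
    then have "real (j - i) = - (a - b)" by (simp add: a_def b_def of_nat_diff)
    moreover have "toeplitzM (alphaSeq p r) i j = W (real (j - i))"
      using True by (simp add: toeplitzM_def alpha_eq[OF rp] W_def)
    ultimately show ?thesis using Wsym[of "a - b"] by simp
  next
    case False
    then have "real (i - j) = a - b" by (simp add: a_def b_def of_nat_diff)
    moreover have "toeplitzM (alphaSeq p r) i j = W (real (i - j))"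
      using False by (simp add: toeplitzM_def alpha_eq[OF rp] W_def)
    ultimately show ?thesis by simp
  qed
  have H: "hankelM n (alphaSeq p r) i j = W (a + b) + W (a + b - 2 * real n)"
  proof -
    have e1: "real (i + j - 1) = a + b" using i j by (simp add: a_def b_def of_nat_diff)
    have e2: "real (2 * n + 1 - i - j) = - (a + b - 2 * real n)" using i j by (simp add: a_def b_def of_nat_diff)
    show ?thesis unfolding hankelM_def alpha_eq[OF rp] W_def[symmetric] e1 e2 Wsym ..
  qed
  show "Xmat p r n i j = real n powi (2 * int r - 1) *
      (toeplitzM (alphaSeq p r) i j + hankelM n (alphaSeq p r) i j)"
    unfolding X pw T H by (simp add: add.assoc)
qed


end
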